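(* If $G$ is a graph and $m$ is a minimal $k$-precentral function for $G$, then $m^*(y)-m^*(z) \leq 1$ for all $y,z \in V(G)$.
   Context: Let $k\ge 2$ be an integer and $G$ a graph with $|E(G)|\equiv 0 \pmod{k}$. A $k$-precentral function for $G$ is a function $p: V(G)\to\mathbb{Z}_{\geq 0}$ with $\sum_{x\in V(G)} p(x)=\frac{1}{k}|E(G)|$. For such $p$, define $p^*(x)=p(x)-\frac{1}{2k}\deg_G(x)$ for each $x\in V(G)$. The function $p$ is proportional if $p(x)\in\{\lfloor \frac{1}{2k}\deg_G(x)\rfloor, \lceil \frac{1}{2k}\deg_G(x)\rceil\}$ for every $x\in V(G)$. A proportional $k$-precentral function $p$ is minimal if it minimises $\sum_{x\in V(G)}|p^*(x)|$ among all proportional $k$-precentral functions for $G$. *)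

theory Defs
  imports Main "HOL-Library.Multiset" Complex_Main
begin

definition graph :: "'a set \<Rightarrow> 'a set set \<Rightarrow> bool" where
  "graph V E \<longleftrightarrow> finite V \<and> (\<forall>e\<in>E. e \<subseteq> V \<and> card e = 2)"

definition deg :: "'a set set \<Rightarrow> 'a \<Rightarrow> nat" where
  "deg E x = card {e \<in> E. x \<in> e}"

definition precentral :: "nat \<Rightarrow> 'a set \<Rightarrow> 'a set set \<Rightarrow> ('a \<Rightarrow> nat) \<Rightarrow> bool" where
  "precentral k V E p \<longleftrightarrow> real (\<Sum>x\<in>V. p x) = real (card E) / real k"

definition pstar :: "nat \<Rightarrow> 'a set set \<Rightarrow> ('a \<Rightarrow> nat) \<Rightarrow> 'a \<Rightarrow> real" where
  "pstar k E p x = real (p x) - real (deg E x) / (2 * real k)"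

definition proportional :: "nat \<Rightarrow> 'a set \<Rightarrow> 'a set set \<Rightarrow> ('a \<Rightarrow> nat) \<Rightarrow> bool" where
  "proportional k V E p \<longleftrightarrow> precentral k V E p \<and>
     (\<forall>x\<in>V. int (p x) = \<lfloor>real (deg E x) / (2 * real k)\<rfloor> \<or>
             int (p x) = \<lceil>real (deg E x) / (2 * real k)\<rceil>)"

definition minimal_precentral :: "nat \<Rightarrow> 'a set \<Rightarrow> 'a set set \<Rightarrow> ('a \<Rightarrow> nat) \<Rightarrow> bool" where
  "minimal_precentral k V E p \<longleftrightarrow> proportional k V E p \<and>
     (\<forall>q. proportional k V E q \<longrightarrow>
        (\<Sum>x\<in>V. \<bar>pstar k E p x\<bar>) \<le> (\<Sum>x\<in>V. \<bar>pstar k E q x\<bar>))"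

end

theory Submission
  imports Defs
begin

lemma sum_two:
  assumes "finite V" "y \<in> V" "z \<in> V" "y \<noteq> z"
  shows "sum f V = f y + f z + sum f (V - {y,z})"
proof -
  have "sum f V = f y + sum f (V - {y})" using assms by (simp add: sum.remove)
  also have "sum f (V - {y}) = f z + sum f (V - {y} - {z})"
    using assms by (simp add: sum.remove)
  also have "V - {y} - {z} = V - {y,z}" by auto
  finally show ?thesis by (simp add: add.assoc)
qed

theorem lemma14:
  fixes V :: "'a set" and E :: "'a set set" and k :: nat and m :: "'a \<Rightarrow> nat"
  assumes "graph V E" and "k \<ge> 2" and "k dvd card E"
    and "minimal_precentral k V E m"
    and "y \<in> V" and "z \<in> V"
  shows "pstar k E m y - pstar k E m z \<le> 1"
proof (rule ccontr)
  assume H: "\<not> ?thesis"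
  have fin: "finite V" using assms(1) unfolding graph_def by simp
  have yz: "y \<noteq> z" using H by auto
  have prp: "proportional k V E m" using assms(4) unfolding minimal_precentral_def by simp
  define dy where "dy = real (deg E y) / (2 * real k)"
  define dz where "dz = real (deg E z) / (2 * real k)"
  have dy0: "dy \<ge> 0" and dz0: "dz \<ge> 0" unfolding dy_def dz_def by auto
  have my: "int (m y) = \<lfloor>dy\<rfloor> \<or> int (m y) = \<lceil>dy\<rceil>"
    using prp assms(5) unfolding proportional_def dy_def by blast
  have mz: "int (m z) = \<lfloor>dz\<rfloor> \<or> int (m z) = \<lceil>dz\<rceil>"
    using prp assms(6) unfolding proportional_def dz_def by blast
  have a: "pstar k E m y = real (m y) - dy" unfolding pstar_def dy_def by simp
  have b: "pstar k E m z = real (m z) - dz" unfolding pstar_def dz_def by simp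
  have ya: "real (m y) - dy < 1" using my by linarith
  have zb: "real (m z) - dz > -1" using mz by linarith
  have apos: "real (m y) > dy" using H a b ya zb by linarith
  have bneg: "real (m z) < dz" using H a b ya zb by linarith
  have my1: "m y \<ge> 1" using apos dy0 by linarith
  have myc: "int (m y) = \<lceil>dy\<rceil>" using my apos by linarith
  have "real_of_int (int (m y)) - 1 < dy" using myc ceiling_correct[of dy] by linarith
  then have myf: "int (m y) - 1 = \<lfloor>dy\<rfloor>" using apos
    by (subst eq_commute, subst floor_eq_iff) auto
  have mzf: "int (m z) = \<lfloor>dz\<rfloor>" using mz bneg by linarith
  have "dz < real_of_int (int (m z)) + 1" using mzf floor_correct[of dz] by linarith
  then have mzc: "int (m z) + 1 = \<lceil>dz\<rceil>" using bneg
    by (subst eq_commute, subst ceiling_eq_iff) auto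
  define q where "q = m(y := m y - 1, z := m z + 1)"
  have qy: "q y = m y - 1" and qz: "q z = m z + 1" using yz unfolding q_def by auto
  have qo: "\<And>x. x \<in> V - {y,z} \<Longrightarrow> q x = m x" unfolding q_def by auto
  have sq: "sum q V = sum m V"
  proof -
    have e: "sum q (V - {y,z}) = sum m (V - {y,z})" using qo by (intro sum.cong) auto
    show ?thesis
      unfolding sum_two[OF fin assms(5,6) yz, of q] sum_two[OF fin assms(5,6) yz, of m] e
      using qy qz my1 by simp
  qed
  have qprop: "proportional k V E q"
    unfolding proportional_def
  proof (intro conjI ballI)
    show "precentral k V E q" using prp sq unfolding proportional_def precentral_def by simp
  next
    fix x assume x: "x \<in> V"
    show "int (q x) = \<lfloor>real (deg E x) / (2 * real k)\<rfloor> \<or>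
          int (q x) = \<lceil>real (deg E x) / (2 * real k)\<rceil>"
    proof (cases "x = y")
      case True then show ?thesis using qy myf my1 dy_def by (simp add: of_nat_diff)
    next
      case False
      show ?thesis
      proof (cases "x = z")
        case True then show ?thesis using qz mzc dz_def by simp
      next
        case False2: False
        then show ?thesis using False x qo prp unfolding proportional_def by auto
      qed
    qed
  qed
  have qa: "pstar k E q y = real (m y) - 1 - dy" using qy my1 unfolding pstar_def dy_def
    by (simp add: of_nat_diff)
  have qb: "pstar k E q z = real (m z) + 1 - dz" using qz unfolding pstar_def dz_def by simp
  have po: "\<And>x. x \<in> V - {y,z} \<Longrightarrow> pstar k E q x = pstar k E m x"
    using qo unfolding pstar_def by simp
  have "(\<Sum>x\<in>V. \<bar>pstar k E q x\<bar>) < (\<Sum>x\<in>V. \<bar>pstar k E m x\<bar>)"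
  proof -
    have e: "(\<Sum>x\<in>V - {y,z}. \<bar>pstar k E q x\<bar>) = (\<Sum>x\<in>V - {y,z}. \<bar>pstar k E m x\<bar>)"
      using po by (intro sum.cong) auto
    have "\<bar>pstar k E q y\<bar> + \<bar>pstar k E q z\<bar> < \<bar>pstar k E m y\<bar> + \<bar>pstar k E m z\<bar>"
      using qa qb a b apos bneg ya zb H by linarith
    then show ?thesis
      using sum_two[OF fin assms(5,6) yz, of "\<lambda>x. \<bar>pstar k E q x\<bar>"]
        sum_two[OF fin assms(5,6) yz, of "\<lambda>x. \<bar>pstar k E m x\<bar>"] e by linarith
  qed
  moreover have "(\<Sum>x\<in>V. \<bar>pstar k E m x\<bar>) \<le> (\<Sum>x\<in>V. \<bar>pstar k E q x\<bar>)"
    using assms(4) qprop unfolding minimal_precentral_def by blast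
  ultimately show False by linarith
qed

end
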